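(* Let $n\ge1$. If $A\subseteq\Omega_n$ has odd cardinality, then $\mu_n(A)\neq0$.
   Context: For $n\ge1$, $\Omega_n$ is the set of strings $\omega=\alpha_0\alpha_1\cdots\alpha_n$ with $\alpha_k\in\{0,1\}$, $\alpha_0=0$. For $\omega=\alpha_0\cdots\alpha_n$, $\omega'=\alpha'_0\cdots\alpha'_n\in\Omega_n$ let $D^n(\omega,\omega')=2^{-n}\prod_{k=1}^n i^{|\alpha_k-\alpha_{k-1}|}\prod_{k=1}^n i^{-|\alpha'_k-\alpha'_{k-1}|}\,\delta_{\alpha_n\alpha'_n}$ ($i=\sqrt{-1}$), and for $A\subseteq\Omega_n$ let $\mu_n(A)=\sum_{\omega,\omega'\in A}D^n(\omega,\omega')$. *)

theory Defs
  imports Complex_Main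
begin

definition Omega :: "nat \<Rightarrow> nat list set" where
  "Omega n = {w. length w = n + 1 \<and> set w \<subseteq> {0, 1} \<and> w ! 0 = 0}"

definition D :: "nat \<Rightarrow> nat list \<Rightarrow> nat list \<Rightarrow> complex" where
  "D n w w' =
     (1 / 2 ^ n) *
     (\<Prod>k\<in>{1..n}. \<i> powi \<bar>int (w ! k) - int (w ! (k - 1))\<bar>) *
     (\<Prod>k\<in>{1..n}. \<i> powi (- \<bar>int (w' ! k) - int (w' ! (k - 1))\<bar>)) *
     (if w ! n = w' ! n then 1 else 0)"

definition mu :: "nat \<Rightarrow> nat list set \<Rightarrow> complex" where
  "mu n A = (\<Sum>w\<in>A. \<Sum>w'\<in>A. D n w w')"

end

theory Submission
  imports Defs
begin

definition Ew :: "nat \<Rightarrow> nat list \<Rightarrow> nat" where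
  "Ew n w = (\<Sum>k\<in>{1..n}. nat \<bar>int (w ! k) - int (w ! (k - 1))\<bar>)"

definition rw :: "nat \<Rightarrow> nat list \<Rightarrow> int" where
  "rw n w = (-1) ^ (Ew n w div 2)"

lemma prodE: "(\<Prod>k\<in>{1..n}. \<i> powi \<bar>int (w ! k) - int (w ! (k - 1))\<bar>) = \<i> ^ Ew n w"
proof -
  have "\<And>k. \<i> powi \<bar>int (w ! k) - int (w ! (k - 1))\<bar> = \<i> ^ nat \<bar>int (w ! k) - int (w ! (k - 1))\<bar>"
    by (metis abs_ge_zero int_nat_eq power_int_of_nat)
  then show ?thesis unfolding Ew_def by (simp add: power_sum)
qed

lemma prodE': "(\<Prod>k\<in>{1..n}. \<i> powi (- \<bar>int (w ! k) - int (w ! (k - 1))\<bar>)) = inverse (\<i> ^ Ew n w)"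
  unfolding prodE[symmetric] power_int_minus prod_inversef[symmetric] comp_def ..

lemma telesc:
  fixes g :: "nat \<Rightarrow> int" and n :: nat
  shows "(\<Sum>k\<in>{1..n}. (g k - g (k - 1))) = g n - g 0"
  by (induction n) simp_all

lemma evabs: "even (\<bar>x\<bar> - (x::int))"
  by (cases "x \<ge> 0") auto

lemma lastbit:
  assumes "w \<in> Omega n"
  shows "w ! n = 0 \<or> w ! n = 1"
proof -
  have "n < length w" using assms by (simp add: Omega_def)
  then have "w ! n \<in> set w" by (rule nth_mem)
  then have "w ! n \<in> {0,1}" using assms unfolding Omega_def by blast
  then show ?thesis by auto
qed

lemma parity:
  assumes "w \<in> Omega n"
  shows "Ew n w mod 2 = w ! n"
proof -
  have ev: "even (int (Ew n w) - int (w ! n))"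
  proof -
    have "int (Ew n w) = (\<Sum>k\<in>{1..n}. \<bar>int (w ! k) - int (w ! (k - 1))\<bar>)"
      unfolding Ew_def by simp
    moreover have "int (w ! n) = (\<Sum>k\<in>{1..n}. int (w ! k) - int (w ! (k - 1)))"
      using assms telesc[of "\<lambda>k. int (w ! k)" n] by (simp add: Omega_def)
    ultimately have "int (Ew n w) - int (w ! n) = (\<Sum>k\<in>{1..n}. \<bar>int (w ! k) - int (w ! (k - 1))\<bar> - (int (w ! k) - int (w ! (k - 1))))"
      by (simp add: sum_subtractf)
    also have "even \<dots>"
      by (rule dvd_sum) (rule evabs)
    finally show ?thesis .
  qed
  show ?thesis using lastbit[OF assms] ev by (elim disjE) presburger+
qed

lemma ipow:
  assumes "w \<in> Omega n"
  shows "\<i> ^ Ew n w = of_int (rw n w) * \<i> ^ (w ! n)"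
proof -
  have "Ew n w = 2 * (Ew n w div 2) + w ! n" using parity[OF assms] by (metis mult.commute div_mult_mod_eq)
  then have "\<i> ^ Ew n w = (\<i>^2) ^ (Ew n w div 2) * \<i> ^ (w ! n)"
    by (metis power_add power_mult)
  then show ?thesis by (simp add: rw_def)
qed

lemma Dform:
  assumes "w \<in> Omega n" "w' \<in> Omega n"
  shows "D n w w' = of_int (rw n w * rw n w' * (if w ! n = w' ! n then 1 else 0)) / 2 ^ n"
proof -
  have r2: "inverse (of_int (rw n w') :: complex) = of_int (rw n w')"
    unfolding rw_def by (simp add: power_inverse[symmetric])
  have "D n w w' = (1 / 2 ^ n) * (of_int (rw n w) * \<i> ^ (w ! n)) * inverse (of_int (rw n w') * \<i> ^ (w' ! n))
      * (if w ! n = w' ! n then 1 else 0)"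
    unfolding D_def prodE prodE' ipow[OF assms(1)] ipow[OF assms(2)] by simp
  also have "\<dots> = of_int (rw n w * rw n w' * (if w ! n = w' ! n then 1 else 0)) / 2 ^ n"
  proof (cases "w ! n = w' ! n")
    case True
    have "inverse (of_int (rw n w') * \<i> ^ (w' ! n)) = of_int (rw n w') * inverse (\<i> ^ (w ! n))"
      by (simp only: inverse_mult_distrib r2 True)
    moreover have "\<i> ^ (w ! n) * inverse (\<i> ^ (w ! n)) = 1" by simp
    ultimately have "(of_int (rw n w) * \<i> ^ (w ! n)) * inverse (of_int (rw n w') * \<i> ^ (w' ! n))
        = of_int (rw n w) * of_int (rw n w') * (\<i> ^ (w ! n) * inverse (\<i> ^ (w ! n)))"
      by (simp only: mult_ac)
    also have "\<dots> = of_int (rw n w * rw n w')" using \<open>\<i> ^ (w ! n) * inverse (\<i> ^ (w ! n)) = 1\<close> by simp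
    finally show ?thesis using True by simp
  next
    case False then show ?thesis by simp
  qed
  finally show ?thesis .
qed

lemma sum_pm1_parity:
  assumes "finite B" "\<And>w. w \<in> B \<Longrightarrow> f w = 1 \<or> f w = (-1::int)"
  shows "odd (sum f B) \<longleftrightarrow> odd (card B)"
  using assms
proof (induction B rule: finite_induct)
  case empty then show ?case by simp
next
  case (insert x F)
  have fx: "f x = 1 \<or> f x = -1" using insert.prems by auto
  have "sum f (insert x F) = f x + sum f F" "card (insert x F) = Suc (card F)"
    using insert.hyps by auto
  moreover have "odd (sum f F) \<longleftrightarrow> odd (card F)" using insert by auto
  ultimately show ?case using fx by (elim disjE) simp_all
qed

theorem lemma2p6:
  fixes n :: nat and A :: "nat list set"
  assumes "n \<ge> 1" and "A \<subseteq> Omega n" and "odd (card A)"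
  shows "mu n A \<noteq> 0"
proof -
  have fin: "finite A" using assms(3) card.infinite by force
  define A0 where "A0 = {w\<in>A. w ! n = 0}"
  define A1 where "A1 = {w\<in>A. w ! n \<noteq> 0}"
  define S where "S b = (\<Sum>w\<in>A. if w ! n = b then rw n w else 0)" for b
  define M where "M = (\<Sum>w\<in>A. \<Sum>w'\<in>A. rw n w * rw n w' * (if w ! n = w' ! n then 1 else 0))"
  have "mu n A = (\<Sum>w\<in>A. \<Sum>w'\<in>A. of_int (rw n w * rw n w' * (if w ! n = w' ! n then 1 else 0)) / 2 ^ n)"
    unfolding mu_def by (intro sum.cong refl Dform) (use assms(2) in auto)
  also have "\<dots> = of_int M / 2 ^ n"
    unfolding M_def by (simp add: sum_divide_distrib)
  finally have muM: "mu n A = of_int M / 2 ^ n" .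
  have "M = (\<Sum>w\<in>A. rw n w * S (w ! n))"
    unfolding M_def S_def by (simp add: sum_distrib_left if_distrib cong: if_cong) (simp add: eq_commute)
  also have "\<dots> = (\<Sum>w\<in>A0. rw n w * S (w ! n)) + (\<Sum>w\<in>A1. rw n w * S (w ! n))"
    unfolding A0_def A1_def using fin by (subst sum.union_disjoint[symmetric]) (auto intro: sum.cong)
  also have "(\<Sum>w\<in>A1. rw n w * S (w ! n)) = (\<Sum>w\<in>A1. rw n w * S 1)"
    unfolding A1_def using assms(2) lastbit by (intro sum.cong refl) force
  also have "(\<Sum>w\<in>A0. rw n w * S (w ! n)) = (\<Sum>w\<in>A0. rw n w * S 0)"
    unfolding A0_def by (intro sum.cong refl) force
  also have "S 0 = (\<Sum>w\<in>A0. rw n w)"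
    unfolding S_def A0_def using fin by (simp add: sum.inter_filter)
  also have "S 1 = (\<Sum>w\<in>A1. rw n w)"
  proof -
    have "{w\<in>A. w ! n = 1} = A1" unfolding A1_def using assms(2) lastbit by force
    then show ?thesis unfolding S_def using fin by (simp add: sum.inter_filter[symmetric])
  qed
  finally have M2: "M = (\<Sum>w\<in>A0. rw n w)^2 + (\<Sum>w\<in>A1. rw n w)^2"
    by (simp add: sum_distrib_right power2_eq_square)
  have pm: "\<And>w. rw n w = 1 \<or> rw n w = -1" unfolding rw_def by (simp add: minus_one_power_iff)
  have "A = A0 \<union> A1" "A0 \<inter> A1 = {}" unfolding A0_def A1_def by auto
  then have "card A = card A0 + card A1" using fin
    by (metis card_Un_disjoint finite_Un)
  then have "odd (card A0) \<or> odd (card A1)" using assms(3) by auto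
  moreover have "finite A0" "finite A1" using fin unfolding A0_def A1_def by auto
  ultimately have "odd (\<Sum>w\<in>A0. rw n w) \<or> odd (\<Sum>w\<in>A1. rw n w)"
    using sum_pm1_parity[of A0 "rw n"] sum_pm1_parity[of A1 "rw n"] pm by blast
  then have "(\<Sum>w\<in>A0. rw n w) \<noteq> 0 \<or> (\<Sum>w\<in>A1. rw n w) \<noteq> 0" by auto
  then have "M > 0" unfolding M2 by (metis add_pos_nonneg add_nonneg_pos zero_le_power2 zero_less_power2)
  then show ?thesis unfolding muM by simp
qed

end
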